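(* Let $V\ge 1$, let $z\in\mathbb{R}^V$ be a logit vector and $p=\mathrm{softmax}(z)$, i.e. $p_i=e^{z_i}/\sum_{k=1}^V e^{z_k}$. Partition $\{1,\dots,V\}=\mathcal{P}\sqcup\mathcal{N}$ into correct tokens $\mathcal{P}$ and incorrect tokens $\mathcal{N}$. Let $N\ge 1$ be the number of sampled rollout tokens, let $A\subseteq\mathcal{P}$ be the set of sampled correct tokens, $B\subseteq\mathcal{N}$ the set of sampled incorrect tokens, and $U=\{1,\dots,V\}\setminus(A\cup B)$ the set of unsampled tokens. Let rewards $R_c\ge 0\ge R_w$ be given and set $R_j=R_c$ for $j\in A$, $R_j=R_w$ for $j\in B$, $R_j=0$ for $j\in U$. Define $P_{\mathrm{pos}}=\sum_{i\in A}p_i$, $P_{\mathrm{neg}}=\sum_{i\in B}p_i$, $Q_{\mathrm{pos}}=\sum_{i\in\mathcal{P}}p_i$, $Q_{\mathrm{neg}}=1-Q_{\mathrm{pos}}$, $A_2=\sum_{i\in A}p_i^2$, $B_2=\sum_{i\in B}p_i^2$, $U_{\mathrm{pos},2}=\sum_{i\in U\cap\mathcal{P}}p_i^2$, $U_{\mathrm{neg},2}=\sum_{i\in U\cap\mathcal{N}}p_i^2$, and $S_R=R_cP_{\mathrm{pos}}+R_wP_{\mathrm{neg}}$. Let $\eta>0$ and consider the one-step logit update (a gradient-descent step with learning rate $\eta$ on the surrogate loss $-\frac1N\sum_{i=1}^V R_i p_i$) $$\Delta z_j=\frac{\eta}{N}\,p_j\,(R_j-S_R),\qquad j=1,\dots,V,$$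 with induced first-order probability change $\Delta p_i=\sum_{j=1}^V\frac{\partial p_i}{\partial z_j}\Delta z_j=p_i\big(\Delta z_i-\sum_{j=1}^V p_j\Delta z_j\big)$, and let $\Delta Q_{\mathrm{pos}}=\sum_{i\in\mathcal{P}}\Delta p_i$. Then $$\Delta Q_{\mathrm{pos}}=\frac{\eta}{N}\Big[(R_c-S_R)\,Q_{\mathrm{neg}}\,A_2+(S_R-R_w)\,Q_{\mathrm{pos}}\,B_2+S_R\big(Q_{\mathrm{pos}}U_{\mathrm{neg},2}-Q_{\mathrm{neg}}U_{\mathrm{pos},2}\big)\Big].$$ Moreover $A_2,B_2\ge 0$ and $S_R\in[R_w,R_c]$, so $R_c-S_R\ge0$ and $S_R-R_w\ge 0$; hence the first two terms in the bracket are nonnegative.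
   Context: This models a single reinforcement-learning-with-verifiable-rewards update at the token level: $N$ tokens are sampled from $p$, sampled correct tokens receive reward $R_c$, sampled incorrect tokens receive reward $R_w$, and unsampled tokens receive reward $0$. $\Delta Q_{\mathrm{pos}}$ is the first-order (linearized) change in the total probability mass of correct tokens. *)

theory Defs
  imports Complex_Main
begin

text \<open>Tokens are indexed by {1..V}; logits z :: nat => real (only values on {1..V} matter).\<close>

definition softmax :: "nat \<Rightarrow> (nat \<Rightarrow> real) \<Rightarrow> nat \<Rightarrow> real" where
  "softmax V z i = exp (z i) / (\<Sum>k\<in>{1..V}. exp (z k))"

definition reward :: "nat set \<Rightarrow> nat set \<Rightarrow> real \<Rightarrow> real \<Rightarrow> nat \<Rightarrow> real" where
  "reward A B Rc Rw j = (if j \<in> A then Rc else if j \<in> B then Rw else 0)"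

definition S_R :: "(nat \<Rightarrow> real) \<Rightarrow> nat set \<Rightarrow> nat set \<Rightarrow> real \<Rightarrow> real \<Rightarrow> real" where
  "S_R p A B Rc Rw = Rc * (\<Sum>i\<in>A. p i) + Rw * (\<Sum>i\<in>B. p i)"

definition delta_z :: "real \<Rightarrow> nat \<Rightarrow> (nat \<Rightarrow> real) \<Rightarrow> nat set \<Rightarrow> nat set \<Rightarrow> real \<Rightarrow> real \<Rightarrow> nat \<Rightarrow> real" where
  "delta_z \<eta> N p A B Rc Rw j = \<eta> / real N * p j * (reward A B Rc Rw j - S_R p A B Rc Rw)"

text \<open>First-order (linearized) probability change induced by a logit change dz under softmax:
  Delta p_i = sum_j (d p_i / d z_j) dz_j = p_i (dz_i - sum_j p_j dz_j).\<close>
definition delta_p :: "nat \<Rightarrow> (nat \<Rightarrow> real) \<Rightarrow> (nat \<Rightarrow> real) \<Rightarrow> nat \<Rightarrow> real" where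
  "delta_p V p dz i = p i * (dz i - (\<Sum>j\<in>{1..V}. p j * dz j))"

end

theory Submission
  imports Defs
begin

theorem theorem1:
  fixes V N :: nat and z :: "nat \<Rightarrow> real" and Pset Nset A B :: "nat set"
    and Rc Rw \<eta> :: real
  assumes "V \<ge> 1"
    and "Pset \<union> Nset = {1..V}" and "Pset \<inter> Nset = {}"
    and "N \<ge> 1"
    and "A \<subseteq> Pset" and "B \<subseteq> Nset"
    and "Rc \<ge> 0" and "0 \<ge> Rw"
    and "\<eta> > 0"
  shows
    "let p = softmax V z;
         U = {1..V} - (A \<union> B);
         Qpos = (\<Sum>i\<in>Pset. p i);
         Qneg = 1 - Qpos;
         A2 = (\<Sum>i\<in>A. (p i)^2);
         B2 = (\<Sum>i\<in>B. (p i)^2);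
         Upos2 = (\<Sum>i\<in>U \<inter> Pset. (p i)^2);
         Uneg2 = (\<Sum>i\<in>U \<inter> Nset. (p i)^2);
         SR = S_R p A B Rc Rw;
         dz = delta_z \<eta> N p A B Rc Rw;
         dQpos = (\<Sum>i\<in>Pset. delta_p V p dz i)
     in dQpos = \<eta> / real N * ((Rc - SR) * Qneg * A2 + (SR - Rw) * Qpos * B2
                               + SR * (Qpos * Uneg2 - Qneg * Upos2))
        \<and> A2 \<ge> 0 \<and> B2 \<ge> 0 \<and> Rw \<le> SR \<and> SR \<le> Rc
        \<and> Rc - SR \<ge> 0 \<and> SR - Rw \<ge> 0
        \<and> (Rc - SR) * Qneg * A2 \<ge> 0 \<and> (SR - Rw) * Qpos * B2 \<ge> 0"
proof -
  define p where "p = softmax V z"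
  define U where "U = {1..V} - (A \<union> B)"
  define S where "S = S_R p A B Rc Rw"
  define c where "c = \<eta> / real N"
  have fin: "finite A" "finite B" "finite (U \<inter> Pset)" "finite (U \<inter> Nset)" "finite Pset"
    using assms(2,5,6) unfolding U_def
    by (metis finite_Un finite_atLeastAtMost finite_subset Int_lower1 Diff_subset)+
  have pos: "p i \<ge> 0" for i
    unfolding p_def softmax_def by (intro divide_nonneg_nonneg sum_nonneg) auto
  have one: "(\<Sum>i\<in>{1..V}. p i) = 1"
  proof -
    have "(\<Sum>k\<in>{1..V}. exp (z k)) > 0" using assms(1) by (intro sum_pos) auto
    thus ?thesis unfolding p_def softmax_def by (simp add: sum_divide_distrib[symmetric])
  qed
  have AB: "A \<inter> B = {}" using assms(3,5,6) by blast
  have sumV: "sum f {1..V} = sum f A + sum f B + sum f (U \<inter> Pset) + sum f (U \<inter> Nset)" for f :: "nat \<Rightarrow> real"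
  proof -
    have e: "{1..V} = ((A \<union> B) \<union> (U \<inter> Pset)) \<union> (U \<inter> Nset)"
      using assms(2,5,6) unfolding U_def by blast
    have "sum f {1..V} = sum f ((A \<union> B) \<union> (U \<inter> Pset)) + sum f (U \<inter> Nset)"
      unfolding e using fin assms(3) unfolding U_def
      by (intro sum.union_disjoint) auto
    also have "sum f ((A \<union> B) \<union> (U \<inter> Pset)) = sum f (A \<union> B) + sum f (U \<inter> Pset)"
      using fin unfolding U_def by (intro sum.union_disjoint) auto
    also have "sum f (A \<union> B) = sum f A + sum f B"
      using fin AB by (intro sum.union_disjoint) auto
    finally show ?thesis .
  qed
  have sumP: "sum f Pset = sum f A + sum f (U \<inter> Pset)" for f :: "nat \<Rightarrow> real"
  proof -
    have e: "Pset = A \<union> (U \<inter> Pset)" using assms(2,3,5,6) unfolding U_def by blast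
    show ?thesis
      by (subst e, rule sum.union_disjoint) (use fin in \<open>auto simp: U_def\<close>)
  qed
  have rA: "i \<in> A \<Longrightarrow> reward A B Rc Rw i = Rc" for i by (simp add: reward_def)
  have rB: "i \<in> B \<Longrightarrow> reward A B Rc Rw i = Rw" for i using AB by (auto simp: reward_def)
  have rU: "i \<in> U \<Longrightarrow> reward A B Rc Rw i = 0" for i by (auto simp: reward_def U_def)
  define dz where "dz = delta_z \<eta> N p A B Rc Rw"
  define A2 where "A2 = (\<Sum>i\<in>A. (p i)^2)"
  define B2 where "B2 = (\<Sum>i\<in>B. (p i)^2)"
  define Up where "Up = (\<Sum>i\<in>U \<inter> Pset. (p i)^2)"
  define Ung where "Ung = (\<Sum>i\<in>U \<inter> Nset. (p i)^2)"
  have dzA: "(\<Sum>i\<in>A. p i * dz i) = c * (Rc - S) * A2"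
    unfolding A2_def sum_distrib_left
    by (rule sum.cong) (auto simp: dz_def delta_z_def rA c_def S_def power2_eq_square)
  have dzB: "(\<Sum>i\<in>B. p i * dz i) = c * (Rw - S) * B2"
    unfolding B2_def sum_distrib_left
    by (rule sum.cong) (auto simp: dz_def delta_z_def rB c_def S_def power2_eq_square)
  have dzUp: "(\<Sum>i\<in>U \<inter> Pset. p i * dz i) = c * (- S) * Up"
    unfolding Up_def sum_distrib_left
    by (rule sum.cong) (auto simp: dz_def delta_z_def rU c_def S_def power2_eq_square)
  have dzUn: "(\<Sum>i\<in>U \<inter> Nset. p i * dz i) = c * (- S) * Ung"
    unfolding Ung_def sum_distrib_left
    by (rule sum.cong) (auto simp: dz_def delta_z_def rU c_def S_def power2_eq_square)
  define M where "M = (\<Sum>j\<in>{1..V}. p j * dz j)"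
  define Qp where "Qp = (\<Sum>i\<in>Pset. p i)"
  have dQ: "(\<Sum>i\<in>Pset. delta_p V p dz i) = (\<Sum>i\<in>Pset. p i * dz i) - Qp * M"
    unfolding delta_p_def M_def Qp_def
    by (simp add: right_diff_distrib sum_subtractf sum_distrib_right)
  have Mv: "M = c * (Rc - S) * A2 + c * (Rw - S) * B2 + c * (- S) * Up + c * (- S) * Ung"
    unfolding M_def sumV dzA dzB dzUp dzUn ..
  have eq: "(\<Sum>i\<in>Pset. delta_p V p dz i) = c * ((Rc - S) * (1 - Qp) * A2 + (S - Rw) * Qp * B2
                               + S * (Qp * Ung - (1 - Qp) * Up))"
  proof -
    have "(\<Sum>i\<in>Pset. p i * dz i) = c * (Rc - S) * A2 + c * (- S) * Up"
      using sumP[of "\<lambda>i. p i * dz i"] dzA dzUp by simp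
    then show ?thesis unfolding dQ Mv by (simp add: algebra_simps)
  qed
  have A2: "A2 \<ge> 0" unfolding A2_def by (intro sum_nonneg) auto
  have B2: "B2 \<ge> 0" unfolding B2_def by (intro sum_nonneg) auto
  have PA: "sum p A \<ge> 0" "sum p B \<ge> 0" using pos by (auto intro: sum_nonneg)
  have PAB: "sum p A + sum p B \<le> 1"
    using one sumV[of p] pos fin by (smt (verit) sum_nonneg)
  have Qp: "Qp \<ge> 0" "Qp \<le> 1"
    using one sumV[of p] sumP[of p] pos fin unfolding Qp_def by (smt (verit) sum_nonneg)+
  have S1: "S \<le> Rc"
  proof -
    have "Rw * sum p B \<le> 0" using PA assms(8) by (simp add: mult_nonpos_nonneg)
    moreover have "Rc * sum p A \<le> Rc" using PA PAB assms(7)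
      by (simp add: mult_left_le)
    ultimately show ?thesis unfolding S_def S_R_def by linarith
  qed
  have S2: "Rw \<le> S"
  proof -
    have "Rc * sum p A \<ge> 0" using PA assms(7) by simp
    moreover have "Rw * sum p B \<ge> Rw" using PA PAB assms(8)
    proof -
      have "sum p B \<le> 1" using PA PAB by linarith
      hence "Rw * 1 \<le> Rw * sum p B" using assms(8) by (rule mult_left_mono_neg)
      thus ?thesis by simp
    qed
    ultimately show ?thesis unfolding S_def S_R_def by linarith
  qed
  have t1: "(Rc - S) * (1 - Qp) * A2 \<ge> 0" using S1 Qp A2 by simp
  have t2: "(S - Rw) * Qp * B2 \<ge> 0" using S2 Qp B2 by simp
  show ?thesis
    unfolding Let_def
    using eq A2 B2 S1 S2 t1 t2
    unfolding p_def[symmetric] U_def[symmetric] S_def[symmetric] dz_def[symmetric]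
      A2_def[symmetric] B2_def[symmetric] Up_def[symmetric] Ung_def[symmetric] Qp_def[symmetric] c_def
    by simp
qed

end
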